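(* Let $X$ and $Y$ be non-discrete Tychonoff spaces which both have $P$-number $\tau$, and suppose each of $X$ and $Y$ has a $\tau$-discrete basis of clopen sets (a base for the topology consisting of clopen sets that is a union of $\tau$ many discrete families). Then the $P$-number of $X\times Y$ is $\tau$, and $X\times Y$ has a $\tau$-discrete basis of clopen sets.
   Context: All spaces are Tychonoff. The $P$-number of a space $Z$ is $|Z|$ if $Z$ is discrete; otherwise it is the largest cardinal $\tau$ such that the intersection of any family of fewer than $\tau$ open subsets of $Z$ is open. A family of subsets of $Z$ is discrete if every point of $Z$ has a neighborhood meeting at most one member of the family. A $\tau$-discrete basis is a base of the form $\bigcup_{\alpha<\tau}\mathcal B_\alpha$ with each $\mathcal B_\alpha$ a discrete family. *)

theory Defs
  imports "HOL-Analysis.Analysis"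
begin

definition tychonoff_space :: "'a topology \<Rightarrow> bool" where
  "tychonoff_space X \<longleftrightarrow> completely_regular_space X \<and> t1_space X"

definition is_discrete_space :: "'a topology \<Rightarrow> bool" where
  "is_discrete_space X \<longleftrightarrow> (\<forall>x \<in> topspace X. openin X {x})"

text \<open>The P-number of X equals the cardinal |T|. For non-discrete X: every
  intersection of fewer than |T| open sets is open, and |T| is the largest such
  cardinal, i.e. the property fails for the successor cardinal of |T|: some family
  of at most |T| open sets has non-open intersection. The empty intersection is
  taken to be topspace X.\<close>
definition has_P_number :: "'a topology \<Rightarrow> 'c set \<Rightarrow> bool" where
  "has_P_number X T \<longleftrightarrow>
     (if is_discrete_space X then ordIso2 (card_of (topspace X)) (card_of T)
      else (\<forall>\<F>. (\<forall>U\<in>\<F>. openin X U) \<and> ordLess2 (card_of \<F>) (card_of T) \<longrightarrow> openin X (topspace X \<inter> \<Inter>\<F>))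
         \<and> (\<exists>\<F>. (\<forall>U\<in>\<F>. openin X U) \<and> ordLeq3 (card_of \<F>) (card_of T) \<and> \<not> openin X (topspace X \<inter> \<Inter>\<F>)))"

definition discrete_family :: "'a topology \<Rightarrow> 'a set set \<Rightarrow> bool" where
  "discrete_family X \<A> \<longleftrightarrow>
     (\<forall>x \<in> topspace X. \<exists>N. openin X N \<and> x \<in> N \<and>
        (\<forall>A\<in>\<A>. \<forall>B\<in>\<A>. A \<inter> N \<noteq> {} \<and> B \<inter> N \<noteq> {} \<longrightarrow> A = B))"

definition is_base :: "'a topology \<Rightarrow> 'a set set \<Rightarrow> bool" where
  "is_base X \<B> \<longleftrightarrow> (\<forall>B\<in>\<B>. openin X B) \<and>
     (\<forall>U x. openin X U \<and> x \<in> U \<longrightarrow> (\<exists>B\<in>\<B>. x \<in> B \<and> B \<subseteq> U))"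

definition has_discrete_clopen_basis :: "'a topology \<Rightarrow> 'c set \<Rightarrow> bool" where
  "has_discrete_clopen_basis X T \<longleftrightarrow>
     (\<exists>\<B> :: 'c \<Rightarrow> 'a set set. (\<forall>\<alpha>\<in>T. discrete_family X (\<B> \<alpha>)) \<and>
        is_base X (\<Union>\<alpha>\<in>T. \<B> \<alpha>) \<and>
        (\<forall>B \<in> (\<Union>\<alpha>\<in>T. \<B> \<alpha>). openin X B \<and> closedin X B))"

end

theory Submission
  imports Defs
begin

lemma Pnum_infinite:
  assumes "\<not> is_discrete_space X" "has_P_number X T"
  shows "infinite T"
proof
  assume fin: "finite T"
  from assms obtain F where F: "\<forall>U\<in>F. openin X U" "ordLeq3 (card_of F) (card_of T)"
      "\<not> openin X (topspace X \<inter> \<Inter>F)"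
    unfolding has_P_number_def by auto
  have "finite F" using F(2) fin card_of_ordLeq_finite by blast
  show False
  proof (cases "F = {}")
    case True then show False using F(3) by simp
  next
    case False
    then have "openin X (\<Inter>F)" using F(1) \<open>finite F\<close> by (intro openin_Inter) auto
    moreover have "topspace X \<inter> \<Inter>F = \<Inter>F"
      using False F(1) openin_subset by blast
    ultimately show False using F(3) by simp
  qed
qed

lemma nondiscrete_nonempty:
  assumes "\<not> is_discrete_space X" shows "topspace X \<noteq> {}"
  using assms unfolding is_discrete_space_def by auto

lemma prod_nondiscrete:
  assumes "\<not> is_discrete_space X" "\<not> is_discrete_space Y"
  shows "\<not> is_discrete_space (prod_topology X Y)"
proof
  assume d: "is_discrete_space (prod_topology X Y)"
  from assms(1) obtain x where x: "x \<in> topspace X" "\<not> openin X {x}"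
    unfolding is_discrete_space_def by auto
  have "topspace Y \<noteq> {}" by (rule nondiscrete_nonempty[OF assms(2)])
  then obtain y where y: "y \<in> topspace Y" by (metis all_not_in_conv)
  have "openin (prod_topology X Y) ({x} \<times> {y})"
    using d x y unfolding is_discrete_space_def by auto
  then show False using x(2) by (metis insert_not_empty openin_prod_Times_iff)
qed

lemma prod_inter_open:
  assumes hX: "\<forall>F. (\<forall>U\<in>F. openin X U) \<and> ordLess2 (card_of F) (card_of T) \<longrightarrow> openin X (topspace X \<inter> \<Inter>F)"
    and hY: "\<forall>F. (\<forall>U\<in>F. openin Y U) \<and> ordLess2 (card_of F) (card_of T) \<longrightarrow> openin Y (topspace Y \<inter> \<Inter>F)"
    and W: "\<forall>W\<in>\<W>. openin (prod_topology X Y) W" and c: "ordLess2 (card_of \<W>) (card_of T)"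
  shows "openin (prod_topology X Y) (topspace (prod_topology X Y) \<inter> \<Inter>\<W>)"
proof (subst openin_subopen, intro ballI)
  fix z assume z: "z \<in> topspace (prod_topology X Y) \<inter> \<Inter>\<W>"
  obtain x y where zxy: "z = (x,y)" by (cases z)
  have "\<forall>W\<in>\<W>. \<exists>U V. openin X U \<and> openin Y V \<and> x \<in> U \<and> y \<in> V \<and> U \<times> V \<subseteq> W"
    using W z zxy by (auto simp: openin_prod_topology_alt)
  then obtain u v where uv: "\<And>W. W\<in>\<W> \<Longrightarrow> openin X (u W) \<and> openin Y (v W) \<and> x \<in> u W \<and> y \<in> v W \<and> u W \<times> v W \<subseteq> W"
    by metis
  have cu: "ordLess2 (card_of (u ` \<W>)) (card_of T)"
    using card_of_image c ordLeq_ordLess_trans by blast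
  have cv: "ordLess2 (card_of (v ` \<W>)) (card_of T)"
    using card_of_image c ordLeq_ordLess_trans by blast
  have oU: "openin X (topspace X \<inter> \<Inter>(u ` \<W>))" using hX cu uv by auto
  have oV: "openin Y (topspace Y \<inter> \<Inter>(v ` \<W>))" using hY cv uv by auto
  have o1: "openin (prod_topology X Y) ((topspace X \<inter> \<Inter>(u ` \<W>)) \<times> (topspace Y \<inter> \<Inter>(v ` \<W>)))"
    using oU oV by (simp add: openin_prod_Times_iff)
  have m1: "z \<in> (topspace X \<inter> \<Inter>(u ` \<W>)) \<times> (topspace Y \<inter> \<Inter>(v ` \<W>))"
    using z zxy uv by auto
  have s1: "(topspace X \<inter> \<Inter>(u ` \<W>)) \<times> (topspace Y \<inter> \<Inter>(v ` \<W>)) \<subseteq> topspace (prod_topology X Y) \<inter> \<Inter>\<W>"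
  proof
    fix p assume p: "p \<in> (topspace X \<inter> \<Inter>(u ` \<W>)) \<times> (topspace Y \<inter> \<Inter>(v ` \<W>))"
    then have "p \<in> topspace (prod_topology X Y)" by auto
    moreover have "p \<in> W" if "W \<in> \<W>" for W
    proof -
      have "p \<in> u W \<times> v W" using p that by auto
      then show ?thesis using uv[OF that] by blast
    qed
    ultimately show "p \<in> topspace (prod_topology X Y) \<inter> \<Inter>\<W>" by auto
  qed
  show "\<exists>T. openin (prod_topology X Y) T \<and> z \<in> T \<and> T \<subseteq> topspace (prod_topology X Y) \<inter> \<Inter>\<W>"
    by (intro exI conjI) (rule o1, rule m1, rule s1)
qed

lemma prod_Pnum:
  assumes "\<not> is_discrete_space X" "\<not> is_discrete_space Y"
    and "has_P_number X T" "has_P_number Y T"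
  shows "has_P_number (prod_topology X Y) T"
proof -
  have nd: "\<not> is_discrete_space (prod_topology X Y)" using prod_nondiscrete assms by blast
  have hX: "\<forall>F. (\<forall>U\<in>F. openin X U) \<and> ordLess2 (card_of F) (card_of T) \<longrightarrow> openin X (topspace X \<inter> \<Inter>F)"
    and eX: "\<exists>F. (\<forall>U\<in>F. openin X U) \<and> ordLeq3 (card_of F) (card_of T) \<and> \<not> openin X (topspace X \<inter> \<Inter>F)"
    using assms(1,3) unfolding has_P_number_def by auto
  have hY: "\<forall>F. (\<forall>U\<in>F. openin Y U) \<and> ordLess2 (card_of F) (card_of T) \<longrightarrow> openin Y (topspace Y \<inter> \<Inter>F)"
    using assms(2,4) unfolding has_P_number_def by auto
  from eX obtain F where F: "\<forall>U\<in>F. openin X U" "ordLeq3 (card_of F) (card_of T)"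
    "\<not> openin X (topspace X \<inter> \<Inter>F)" by blast
  define G where "G = (\<lambda>U. U \<times> topspace Y) ` F"
  have G1: "\<forall>W\<in>G. openin (prod_topology X Y) W"
    using F(1) by (auto simp: G_def openin_prod_Times_iff)
  have G2: "ordLeq3 (card_of G) (card_of T)"
    unfolding G_def using card_of_image F(2) ordLeq_transitive by blast
  have eq: "topspace (prod_topology X Y) \<inter> \<Inter>G = (topspace X \<inter> \<Inter>F) \<times> topspace Y"
    by (auto simp: G_def)
  have G3: "\<not> openin (prod_topology X Y) (topspace (prod_topology X Y) \<inter> \<Inter>G)"
    unfolding eq using F(3) nondiscrete_nonempty[OF assms(2)] openin_prod_Times_iff
    by (metis openin_empty)
  have P1: "\<forall>\<F>. (\<forall>U\<in>\<F>. openin (prod_topology X Y) U) \<and> ordLess2 (card_of \<F>) (card_of T)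
      \<longrightarrow> openin (prod_topology X Y) (topspace (prod_topology X Y) \<inter> \<Inter>\<F>)"
    using prod_inter_open[OF hX hY] by blast
  have P2: "\<exists>\<F>. (\<forall>U\<in>\<F>. openin (prod_topology X Y) U) \<and> ordLeq3 (card_of \<F>) (card_of T)
      \<and> \<not> openin (prod_topology X Y) (topspace (prod_topology X Y) \<inter> \<Inter>\<F>)"
    using G1 G2 G3 by blast
  show ?thesis
    unfolding has_P_number_def if_not_P[OF nd] using P1 P2 by (rule conjI)
qed

lemma prod_basis:
  fixes T :: "'c set"
  assumes inf: "infinite T"
    and "has_discrete_clopen_basis X T" "has_discrete_clopen_basis Y T"
  shows "has_discrete_clopen_basis (prod_topology X Y) T"
proof -
  from assms(2) obtain \<B> :: "'c \<Rightarrow> 'a set set" where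
    B: "\<forall>\<alpha>\<in>T. discrete_family X (\<B> \<alpha>)" "is_base X (\<Union>\<alpha>\<in>T. \<B> \<alpha>)"
       "\<forall>B \<in> (\<Union>\<alpha>\<in>T. \<B> \<alpha>). openin X B \<and> closedin X B"
    unfolding has_discrete_clopen_basis_def by blast
  from assms(3) obtain \<C> :: "'c \<Rightarrow> 'b set set" where
    C: "\<forall>\<alpha>\<in>T. discrete_family Y (\<C> \<alpha>)" "is_base Y (\<Union>\<alpha>\<in>T. \<C> \<alpha>)"
       "\<forall>B \<in> (\<Union>\<alpha>\<in>T. \<C> \<alpha>). openin Y B \<and> closedin Y B"
    unfolding has_discrete_clopen_basis_def by blast
  have "ordIso2 (card_of T) (card_of (T \<times> T))"
    using card_of_Times_same_infinite[OF inf] ordIso_symmetric by blast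
  then obtain f where f: "bij_betw f T (T \<times> T)" using card_of_ordIso by blast
  define \<D> where "\<D> = (\<lambda>\<gamma>. {B \<times> C | B C. B \<in> \<B> (fst (f \<gamma>)) \<and> C \<in> \<C> (snd (f \<gamma>))})"
  have fT: "\<gamma> \<in> T \<Longrightarrow> fst (f \<gamma>) \<in> T \<and> snd (f \<gamma>) \<in> T" for \<gamma>
  proof -
    assume "\<gamma> \<in> T"
    then have "f \<gamma> \<in> T \<times> T" using f bij_betwE by blast
    then show ?thesis by (simp add: mem_Times_iff)
  qed
  have D1: "discrete_family (prod_topology X Y) (\<D> \<gamma>)" if g: "\<gamma> \<in> T" for \<gamma>
    unfolding discrete_family_def
  proof (intro ballI)
    fix z assume z: "z \<in> topspace (prod_topology X Y)"
    obtain x y where zxy: "z = (x,y)" by (cases z)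
    have x: "x \<in> topspace X" and y: "y \<in> topspace Y" using z zxy by auto
    obtain N where N: "openin X N" "x \<in> N"
      "\<forall>A\<in>\<B> (fst (f \<gamma>)). \<forall>B\<in>\<B> (fst (f \<gamma>)). A \<inter> N \<noteq> {} \<and> B \<inter> N \<noteq> {} \<longrightarrow> A = B"
    proof -
      have dB: "discrete_family X (\<B> (fst (f \<gamma>)))" using B(1) fT[OF g] by blast
      have "\<exists>N. openin X N \<and> x \<in> N \<and> (\<forall>A\<in>\<B> (fst (f \<gamma>)). \<forall>B\<in>\<B> (fst (f \<gamma>)). A \<inter> N \<noteq> {} \<and> B \<inter> N \<noteq> {} \<longrightarrow> A = B)" using dB x unfolding discrete_family_def by (rule bspec)
      then show ?thesis using that by metis
    qed
    obtain M where M: "openin Y M" "y \<in> M"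
      "\<forall>A\<in>\<C> (snd (f \<gamma>)). \<forall>B\<in>\<C> (snd (f \<gamma>)). A \<inter> M \<noteq> {} \<and> B \<inter> M \<noteq> {} \<longrightarrow> A = B"
    proof -
      have dC: "discrete_family Y (\<C> (snd (f \<gamma>)))" using C(1) fT[OF g] by blast
      have "\<exists>N. openin Y N \<and> y \<in> N \<and> (\<forall>A\<in>\<C> (snd (f \<gamma>)). \<forall>B\<in>\<C> (snd (f \<gamma>)). A \<inter> N \<noteq> {} \<and> B \<inter> N \<noteq> {} \<longrightarrow> A = B)" using dC y unfolding discrete_family_def by (rule bspec)
      then show ?thesis using that by metis
    qed
    show "\<exists>N'. openin (prod_topology X Y) N' \<and> z \<in> N' \<and>
        (\<forall>A\<in>\<D> \<gamma>. \<forall>B\<in>\<D> \<gamma>. A \<inter> N' \<noteq> {} \<and> B \<inter> N' \<noteq> {} \<longrightarrow> A = B)"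
    proof (intro exI conjI ballI impI)
      show "openin (prod_topology X Y) (N \<times> M)" using N M by (simp add: openin_prod_Times_iff)
      show "z \<in> N \<times> M" using N M zxy by auto
      fix A B assume A: "A \<in> \<D> \<gamma>" and Bm: "B \<in> \<D> \<gamma>" and ne: "A \<inter> (N \<times> M) \<noteq> {} \<and> B \<inter> (N \<times> M) \<noteq> {}"
      from A obtain A1 A2 where A12: "A = A1 \<times> A2" "A1 \<in> \<B> (fst (f \<gamma>))" "A2 \<in> \<C> (snd (f \<gamma>))"
        unfolding \<D>_def by blast
      from Bm obtain B1 B2 where B12: "B = B1 \<times> B2" "B1 \<in> \<B> (fst (f \<gamma>))" "B2 \<in> \<C> (snd (f \<gamma>))"
        unfolding \<D>_def by blast
      have n: "A1 \<inter> N \<noteq> {}" "A2 \<inter> M \<noteq> {}" "B1 \<inter> N \<noteq> {}" "B2 \<inter> M \<noteq> {}"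
        using ne A12(1) B12(1) by auto
      have "A1 = B1" using N(3) A12(2) B12(2) n(1,3) by metis
      moreover have "A2 = B2" using M(3) A12(3) B12(3) n(2,4) by metis
      ultimately
      show "A = B" using A12(1) B12(1) by simp
    qed
  qed
  have mem: "D \<in> (\<Union>\<gamma>\<in>T. \<D> \<gamma>) \<Longrightarrow> \<exists>B C. D = B \<times> C \<and> B \<in> (\<Union>\<alpha>\<in>T. \<B> \<alpha>) \<and> C \<in> (\<Union>\<alpha>\<in>T. \<C> \<alpha>)" for D
  proof -
    assume "D \<in> (\<Union>\<gamma>\<in>T. \<D> \<gamma>)"
    then obtain \<gamma> where g: "\<gamma> \<in> T" "D \<in> \<D> \<gamma>" by blast
    then obtain B' C' where bc: "D = B' \<times> C'" "B' \<in> \<B> (fst (f \<gamma>))" "C' \<in> \<C> (snd (f \<gamma>))"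
      unfolding \<D>_def by blast
    have "B' \<in> (\<Union>\<alpha>\<in>T. \<B> \<alpha>)" using bc(2) fT[OF g(1)] by blast
    moreover have "C' \<in> (\<Union>\<alpha>\<in>T. \<C> \<alpha>)" using bc(3) fT[OF g(1)] by blast
    ultimately show ?thesis using bc(1) by blast
  qed
  have D3: "\<forall>D \<in> (\<Union>\<gamma>\<in>T. \<D> \<gamma>). openin (prod_topology X Y) D \<and> closedin (prod_topology X Y) D"
  proof
    fix D assume "D \<in> (\<Union>\<gamma>\<in>T. \<D> \<gamma>)"
    then have "\<exists>B C. D = B \<times> C \<and> B \<in> (\<Union>\<alpha>\<in>T. \<B> \<alpha>) \<and> C \<in> (\<Union>\<alpha>\<in>T. \<C> \<alpha>)" by (rule mem)
    then obtain B' C' where bc: "D = B' \<times> C'" "B' \<in> (\<Union>\<alpha>\<in>T. \<B> \<alpha>)" "C' \<in> (\<Union>\<alpha>\<in>T. \<C> \<alpha>)"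
      by (elim exE conjE)
    have b: "openin X B' \<and> closedin X B'" using B(3) bc(2) by blast
    have c: "openin Y C' \<and> closedin Y C'" using C(3) bc(3) by blast
    show "openin (prod_topology X Y) D \<and> closedin (prod_topology X Y) D"
      unfolding bc(1) using b c by (simp add: openin_prod_Times_iff closedin_prod_Times_iff)
  qed
  have D2: "is_base (prod_topology X Y) (\<Union>\<gamma>\<in>T. \<D> \<gamma>)"
    unfolding is_base_def
  proof (intro conjI allI impI ballI)
    fix D assume "D \<in> (\<Union>\<gamma>\<in>T. \<D> \<gamma>)" then show "openin (prod_topology X Y) D" using D3 by blast
  next
    fix W z assume Wz: "openin (prod_topology X Y) W \<and> z \<in> W"
    obtain x y where zxy: "z = (x,y)" by (cases z)
    obtain U V where UV: "openin X U" "openin Y V" "x \<in> U" "y \<in> V" "U \<times> V \<subseteq> W"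
    proof -
      have "openin (prod_topology X Y) W" "(x,y) \<in> W" using Wz zxy by auto
      then show ?thesis using that unfolding openin_prod_topology_alt by blast
    qed
    obtain B' where B': "B' \<in> (\<Union>\<alpha>\<in>T. \<B> \<alpha>)" "x \<in> B'" "B' \<subseteq> U"
      using B(2) UV unfolding is_base_def by blast
    obtain C' where C': "C' \<in> (\<Union>\<alpha>\<in>T. \<C> \<alpha>)" "y \<in> C'" "C' \<subseteq> V"
      using C(2) UV unfolding is_base_def by blast
    from B' obtain \<alpha> where \<alpha>: "\<alpha> \<in> T" "B' \<in> \<B> \<alpha>" by blast
    from C' obtain \<beta> where \<beta>: "\<beta> \<in> T" "C' \<in> \<C> \<beta>" by blast
    have "(\<alpha>,\<beta>) \<in> f ` T" using f \<alpha>(1) \<beta>(1) by (simp add: bij_betw_def)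
    then obtain \<gamma> where \<gamma>: "\<gamma> \<in> T" "f \<gamma> = (\<alpha>,\<beta>)" by auto
    have "B' \<times> C' \<in> \<D> \<gamma>" unfolding \<D>_def using \<gamma>(2) \<alpha>(2) \<beta>(2) by simp (rule exI[of _ B'], rule exI[of _ C'], simp)
    then have inD: "B' \<times> C' \<in> (\<Union>\<gamma>\<in>T. \<D> \<gamma>)" using \<gamma>(1) by blast
    have h1: "z \<in> B' \<times> C'" using B'(2) C'(2) zxy by simp
    have h2: "B' \<times> C' \<subseteq> U \<times> V" using B'(3) C'(3) by auto
    have h3: "B' \<times> C' \<subseteq> W" using h2 UV(5) by (rule subset_trans)
    show "\<exists>D\<in>(\<Union>\<gamma>\<in>T. \<D> \<gamma>). z \<in> D \<and> D \<subseteq> W"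
      using inD h1 h3 by (intro bexI[of _ "B' \<times> C'"] conjI)
  qed
  have all: "\<forall>\<alpha>\<in>T. discrete_family (prod_topology X Y) (\<D> \<alpha>)" using D1 by blast
  show ?thesis unfolding has_discrete_clopen_basis_def
    by (rule exI[of _ \<D>], intro conjI all D2 D3)
qed

theorem lemma2p2:
  fixes X :: "'a topology" and Y :: "'b topology" and T :: "'c set"
  assumes "tychonoff_space X" and "tychonoff_space Y"
    and "\<not> is_discrete_space X" and "\<not> is_discrete_space Y"
    and "has_P_number X T" and "has_P_number Y T"
    and "has_discrete_clopen_basis X T" and "has_discrete_clopen_basis Y T"
  shows "has_P_number (prod_topology X Y) T \<and> has_discrete_clopen_basis (prod_topology X Y) T"
  using prod_Pnum[OF assms(3,4,5,6)] prod_basis[OF Pnum_infinite[OF assms(3,5)] assms(7,8)]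
  by (rule conjI)

end
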